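(* Let $I$ be a general ring and $a\in I$. The following are equivalent: (1) $a$ is strongly $\pi$-regular in $I$; (2) there exists an idempotent $p=p^2\in\mathrm{comm}^2(a)$ such that $a-ap\in \mathrm{Nil}(I)$ and $a+p\in Q(I)$; (3) there exists an idempotent $p=p^2\in\mathrm{comm}(a)$ such that $a-ap\in\mathrm{Nil}(I)$ and $a+p\in Q(I)$; (4) there exists $b\in\mathrm{comm}^2(a)$ such that $ab^2=b$ and $a^2b-a\in\mathrm{Nil}(I)$; (5) there exists $b\in\mathrm{comm}(a)$ such that $ab^2=b$ and $a^2b-a\in\mathrm{Nil}(I)$.
   Context: A general ring is an associative ring not necessarily having an identity. $\mathrm{Nil}(I)$ is the set of nilpotent elements of $I$. For $p,q\in I$, $p*q=p+q-pq$; $Q(I)=\{q\in I\mid p*q=0=q*p \text{ for some } p\in I\}$; $\mathrm{comm}(a)=\{x\in I\mid xa=ax\}$, $\mathrm{comm}^2(a)=\{x\in I\mid xy=yx\text{ for all }y\in\mathrm{comm}(a)\}$. An element $a\in I$ is strongly $\pi$-regular if there exist $n\in\mathbb{N}$ and $x\in\mathrm{comm}(a)$ with $a^n=a^{n+1}x$. *)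

theory Defs
  imports Main
begin

text \<open>General (not necessarily unital) associative ring: type class ring.
  Positive powers: spow a n = a^(n+1).\<close>

fun spow :: "'a::semigroup_mult \<Rightarrow> nat \<Rightarrow> 'a" where
  "spow a 0 = a"
| "spow a (Suc n) = spow a n * a"

definition rpow :: "'a::semigroup_mult \<Rightarrow> nat \<Rightarrow> 'a" where
  "rpow a n = spow a (n - 1)"   \<comment> \<open>a^n for n \<ge> 1\<close>

definition Nil_set :: "'a::ring set" where
  "Nil_set = {x. \<exists>n\<ge>1. rpow x n = 0}"

definition circ :: "'a::ring \<Rightarrow> 'a \<Rightarrow> 'a" where
  "circ p q = p + q - p * q"

definition Qset :: "'a::ring set" where
  "Qset = {q. \<exists>p. circ p q = 0 \<and> circ q p = 0}"

definition comm :: "'a::ring \<Rightarrow> 'a set" where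
  "comm a = {x. x * a = a * x}"

definition comm2 :: "'a::ring \<Rightarrow> 'a set" where
  "comm2 a = {x. \<forall>y\<in>comm a. x * y = y * x}"

definition strongly_pi_regular :: "'a::ring \<Rightarrow> bool" where
  "strongly_pi_regular a \<longleftrightarrow>
     (\<exists>n\<ge>1. \<exists>x\<in>comm a. rpow a n = rpow a (n + 1) * x)"

end

theory Submission
  imports Defs
begin

lemma spow_commute:
  fixes x y :: "'a::ring"
  assumes "x * y = y * x"
  shows "spow x k * y = y * spow x k"
proof (induction k)
  case 0 then show ?case using assms by simp
next
  case (Suc k)
  have "spow x (Suc k) * y = spow x k * (x * y)" by (simp add: mult.assoc)
  also have "\<dots> = (spow x k * y) * x" using assms by (simp add: mult.assoc)
  also have "\<dots> = y * spow x (Suc k)" using Suc by (simp add: mult.assoc)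
  finally show ?case .
qed

lemma spow_Suc': "spow (x::'a::ring) (Suc k) = x * spow x k"
  using spow_commute[of x x k] by simp

lemma spow_mult:
  fixes x y :: "'a::ring"
  assumes "x * y = y * x"
  shows "spow (x * y) k = spow x k * spow y k"
proof (induction k)
  case 0 then show ?case by simp
next
  case (Suc k)
  have c: "spow y k * x = x * spow y k" using spow_commute[of y x k] assms by simp
  have "spow (x*y) (Suc k) = spow x k * (spow y k * x) * y" using Suc by (simp add: mult.assoc)
  also have "\<dots> = spow x (Suc k) * spow y (Suc k)" using c by (simp add: mult.assoc)
  finally show ?case .
qed

lemma spow_idem:
  fixes p :: "'a::ring"
  assumes "p * p = p"
  shows "spow p k = p"
  using assms by (induction k) auto

lemma spow_ortho:
  fixes a p :: "'a::ring"
  assumes "p * p = p" "a * p = p * a"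
  shows "spow (a - a * p) k = spow a k - spow a k * p"
proof (induction k)
  case 0 then show ?case by simp
next
  case (Suc k)
  let ?A = "spow a k"
  have "spow (a - a * p) (Suc k) = (?A - ?A * p) * (a - a * p)" using Suc by simp
  also have "\<dots> = ?A * a - ?A * (a * p) - ?A * (p * a) + ?A * (p * (a * p))"
    by (simp add: algebra_simps)
  also have "p * (a * p) = a * p" using assms by (metis mult.assoc)
  also have "p * a = a * p" using assms by simp
  finally show ?case by (simp add: mult.assoc)
qed

lemma spow_neg: "spow (- (x::'a::ring)) k = spow x k \<or> spow (- x) k = - spow x k"
  by (induction k) auto

lemma Nil_neg: "(x::'a::ring) \<in> Nil_set \<Longrightarrow> - x \<in> Nil_set"
proof -
  assume "x \<in> Nil_set"
  then obtain n where n: "n \<ge> 1" "spow x (n - 1) = 0" unfolding Nil_set_def rpow_def by blast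
  then have "spow (- x) (n - 1) = 0" using spow_neg[of x "n - 1"] by auto
  then show ?thesis using n unfolding Nil_set_def rpow_def by blast
qed

lemma Nil_spow: "(x::'a::ring) \<in> Nil_set \<longleftrightarrow> (\<exists>k. spow x k = 0)"
proof
  assume "x \<in> Nil_set"
  then show "\<exists>k. spow x k = 0" unfolding Nil_set_def rpow_def by blast
next
  assume "\<exists>k. spow x k = 0"
  then obtain k where "spow x k = 0" by blast
  then have "rpow x (Suc k) = 0" unfolding rpow_def by simp
  then show "x \<in> Nil_set" unfolding Nil_set_def by (intro CollectI exI[of _ "Suc k"]) simp
qed

lemma comm2_comm: "(p::'a::ring) \<in> comm2 a \<Longrightarrow> p * a = a * p"
  unfolding comm2_def comm_def by auto

lemma quasi_comm:
  fixes s q y :: "'a::ring"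
  assumes "circ s q = 0" "circ q s = 0" "y * s = s * y"
  shows "y * q = q * y"
proof -
  have q1: "q = s * q - s" using assms(1) unfolding circ_def by (simp add: algebra_simps)
  have q2: "q * s = s + q" using assms(2) unfolding circ_def by (simp add: algebra_simps)
  define z where "z = y * q"
  have z1: "z = s * z - s * y"
  proof -
    have "z = y * (s * q - s)" using q1 z_def by simp
    also have "\<dots> = (y * s) * q - y * s" by (simp add: algebra_simps)
    also have "\<dots> = s * z - s * y" using assms(3) z_def by (simp add: mult.assoc)
    finally show ?thesis .
  qed
  have "q * z = (q * s) * z - (q * s) * y"
    by (subst z1) (simp add: algebra_simps)
  also have "\<dots> = s * z + q * z - s * y - q * y" using q2 by (simp add: algebra_simps)
  finally have "s * z - s * y - q * y = 0" by (simp add: algebra_simps)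
  then have "z - q * y = 0" using z1 by simp
  then show ?thesis using z_def by simp
qed

lemma lemG:
  fixes a b :: "'a::ring"
  assumes ab: "a * b = b * a" and abb: "a * (b * b) = b"
    and k: "spow a k = spow a k * (a * b)"
  shows "b \<in> comm2 a \<and> a * a * b - a \<in> Nil_set"
proof -
  define p where "p = a * b"
  have pp: "p * p = p" unfolding p_def
    by (metis ab abb mult.assoc)
  have ap: "a * p = p * a" unfolding p_def by (metis ab mult.assoc)
  have bp: "b * p = b" unfolding p_def by (metis ab abb mult.assoc)
  have pb: "p * b = b" unfolding p_def by (metis abb mult.assoc)
  have "spow (a - a * p) k = 0" using spow_ortho[OF pp ap, of k] k p_def by simp
  then have "a - a * p \<in> Nil_set" using Nil_spow by blast
  then have nil: "a * a * b - a \<in> Nil_set" using Nil_neg[of "a - a*p"] p_def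
    by (simp add: mult.assoc)
  define A where "A = spow a k"
  define B where "B = spow b k"
  have pAB: "p = A * B" using spow_mult[OF ab, of k] spow_idem[OF pp, of k] A_def B_def p_def by simp
  have pBA: "p = B * A" using spow_mult[of b a k] ab spow_idem[OF pp, of k] A_def B_def p_def by simp
  have Ap: "A = A * p" using k A_def p_def by simp
  have pA: "p * A = A" using Ap spow_commute[of a p k] ap A_def by simp
  have "b \<in> comm2 a" unfolding comm2_def
  proof (intro CollectI ballI)
    fix y assume "y \<in> comm a"
    then have ya: "y * a = a * y" unfolding comm_def by simp
    have yA: "y * A = A * y" using spow_commute[of a y k] ya A_def by simp
    have c1: "y * p = p * y * p"
    proof -
      have "y * p = A * (y * B)" using pAB yA by (metis mult.assoc)
      also have "\<dots> = p * (A * (y * B))" using pA by (metis mult.assoc)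
      also have "\<dots> = p * y * p" using pAB yA by (metis mult.assoc)
      finally show ?thesis .
    qed
    have c2: "p * y = p * y * p"
    proof -
      have "p * y = B * (y * A)" using pBA yA by (simp add: mult.assoc)
      also have "\<dots> = B * (y * A) * p" using Ap by (simp add: mult.assoc)
      also have "\<dots> = p * y * p" using pBA yA by (simp add: mult.assoc)
      finally show ?thesis .
    qed
    have py: "p * y = y * p" using c1 c2 by simp
    have "b * y = b * p * y" using bp by simp
    also have "\<dots> = b * y * (a * b)" using py p_def by (simp add: mult.assoc)
    also have "\<dots> = b * a * y * b" using ya by (metis mult.assoc)
    also have "\<dots> = p * y * b" using ab p_def by simp
    also have "\<dots> = y * b" using py pb by (simp add: mult.assoc)
    finally show "b * y = y * b" .
  qed
  then show ?thesis using nil by simp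
qed

lemma imp14:
  fixes a :: "'a::ring"
  assumes "strongly_pi_regular a"
  shows "\<exists>b\<in>comm2 a. a * (b * b) = b \<and> a * a * b - a \<in> Nil_set"
proof -
  obtain n x where n: "n \<ge> 1" and x: "x \<in> comm a" and e: "rpow a n = rpow a (n + 1) * x"
    using assms unfolding strongly_pi_regular_def by blast
  obtain k where nk: "n = Suc k" using n by (cases n) auto
  define A where "A = spow a k"
  define u where "u = a * x"
  have xa: "x * a = a * x" using x unfolding comm_def by simp
  have Au: "A = A * u" using e nk A_def u_def unfolding rpow_def by (simp add: mult.assoc)
  have Auj: "A * spow u j = A" for j
    by (induction j) (use Au in \<open>simp_all add: mult.assoc[symmetric]\<close>)
  have aA: "a * A = spow a (Suc k)" unfolding A_def by (rule spow_Suc'[symmetric])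
  have Aa: "A * a = a * A" unfolding A_def by (rule spow_commute) simp
  define b where "b = A * spow x (Suc k)"
  have abu: "a * b = spow u (Suc k)"
  proof -
    have "a * b = (a * A) * spow x (Suc k)" using b_def by (simp add: mult.assoc)
    also have "\<dots> = spow a (Suc k) * spow x (Suc k)" using aA by simp
    also have "\<dots> = spow u (Suc k)" using spow_mult[of a x "Suc k"] xa u_def by simp
    finally show ?thesis .
  qed
  have ua: "u * a = a * u" unfolding u_def using xa by (simp add: mult.assoc)
  have uA: "spow u j * A = A * spow u j" for j
  proof -
    have "u * A = A * u" using spow_commute[of a u k] ua A_def by simp
    then show ?thesis using spow_commute[of u A j] by simp
  qed
  have xA: "spow x j * A = A * spow x j" for j
  proof -
    have "x * A = A * x" using spow_commute[of a x k] xa A_def by simp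
    then show ?thesis using spow_commute[of x A j] by simp
  qed
  have abb: "a * (b * b) = b"
  proof -
    have "a * (b * b) = (a * b) * b" by (simp add: mult.assoc)
    also have "\<dots> = (spow u (Suc k) * A) * spow x (Suc k)" using abu b_def by (simp add: mult.assoc)
    also have "\<dots> = b"
    proof -
      have "spow u (Suc k) * A = A" using uA Auj by metis
      then show ?thesis using b_def by metis
    qed
    finally show ?thesis .
  qed
  have ab: "a * b = b * a"
  proof -
    have "spow x (Suc k) * a = a * spow x (Suc k)" using spow_commute[of x a "Suc k"] xa by simp
    then show ?thesis using b_def Aa by (metis mult.assoc)
  qed
  have kk: "spow a k = spow a k * (a * b)"
  proof -
    have "A * spow u (Suc k) = A" by (rule Auj)
    then show ?thesis using abu A_def by metis
  qed
  show ?thesis using lemG[OF ab abb kk] abb by blast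
qed

lemma imp54:
  fixes a b :: "'a::ring"
  assumes "b \<in> comm a" "a * (b * b) = b" "a * a * b - a \<in> Nil_set"
  shows "b \<in> comm2 a"
proof -
  have ab: "a * b = b * a" using assms(1) unfolding comm_def by simp
  define p where "p = a * b"
  have pp: "p * p = p" unfolding p_def by (metis ab assms(2) mult.assoc)
  have ap: "a * p = p * a" unfolding p_def by (metis ab mult.assoc)
  have "a - a * p \<in> Nil_set" using Nil_neg[OF assms(3)] p_def by (simp add: mult.assoc)
  then obtain k where "spow (a - a * p) k = 0" using Nil_spow by blast
  then have "spow a k = spow a k * (a * b)" using spow_ortho[OF pp ap, of k] p_def by simp
  then show ?thesis using lemG[OF ab assms(2)] by blast
qed

fun geo :: "'a::ring \<Rightarrow> nat \<Rightarrow> 'a" where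
  "geo n 0 = n"
| "geo n (Suc k) = geo n k + spow n (Suc k)"

lemma geo_mult: "(n::'a::ring) * geo n k = geo n (Suc k) - n"
proof (induction k)
  case 0 then show ?case by simp
next
  case (Suc k)
  have "n * geo n (Suc k) = n * geo n k + n * spow n (Suc k)" by (simp add: algebra_simps)
  also have "n * spow n (Suc k) = spow n (Suc (Suc k))" using spow_Suc'[of n "Suc k"] by simp
  finally show ?case using Suc by simp
qed

lemma geo_comm: "(x::'a::ring) * n = n * x \<Longrightarrow> x * geo n k = geo n k * x"
proof (induction k)
  case 0 then show ?case by simp
next
  case (Suc k)
  have "x * spow n (Suc k) = spow n (Suc k) * x" using spow_commute[of n x "Suc k"] Suc.prems by simp
  then show ?case using Suc by (simp add: algebra_simps)
qed

lemma spow_left_zero: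
  fixes x n :: "'a::ring"
  assumes h: "x * n = 0"
  shows "x * spow n j = 0"
proof (induction j)
  case 0 then show ?case using h by simp
next
  case (Suc j)
  have "x * spow n (Suc j) = (x * spow n j) * n" by (simp add: mult.assoc)
  then show ?case using Suc by simp
qed

lemma geo_zero:
  fixes x n :: "'a::ring"
  assumes h: "x * n = 0"
  shows "x * geo n k = 0"
proof (induction k)
  case 0 then show ?case using h by simp
next
  case (Suc k)
  have "x * geo n (Suc k) = x * geo n k + x * spow n (Suc k)" by (simp only: geo.simps distrib_left)
  then show ?case using Suc spow_left_zero[OF h, of "Suc k"] by simp
qed

lemma imp42:
  fixes a b :: "'a::ring"
  assumes b2: "b \<in> comm2 a" and abb: "a * (b * b) = b" and nil: "a * a * b - a \<in> Nil_set"
  shows "\<exists>p. p = p * p \<and> p \<in> comm2 a \<and> a - a * p \<in> Nil_set \<and> a + p \<in> Qset"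
proof -
  have ab: "a * b = b * a" using comm2_comm[OF b2] by simp
  define p where "p = a * b"
  have pp: "p * p = p" unfolding p_def by (metis ab abb mult.assoc)
  have ap: "a * p = p * a" unfolding p_def by (metis ab mult.assoc)
  have pb: "p * b = b" unfolding p_def by (metis abb mult.assoc)
  have bp: "b * p = b" unfolding p_def by (metis ab abb mult.assoc)
  have pc2: "p \<in> comm2 a" unfolding comm2_def p_def
  proof (intro CollectI ballI)
    fix y assume "y \<in> comm a"
    then have ya: "y * a = a * y" unfolding comm_def by simp
    have "b * y = y * b" using b2 \<open>y \<in> comm a\<close> unfolding comm2_def by blast
    then show "a * b * y = y * (a * b)" using ya by (metis mult.assoc)
  qed
  define n where "n = a - a * p"
  have nN: "n \<in> Nil_set" using Nil_neg[OF nil] p_def n_def by (simp add: mult.assoc)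
  then obtain k where k: "spow n k = 0" using Nil_spow by blast
  have pap: "p * a * p = a * p" using ap pp by (metis mult.assoc)
  have pn: "p * n = 0"
  proof -
    have "p * n = p * a - p * a * p" unfolding n_def by (simp add: algebra_simps mult.assoc)
    then show ?thesis using pap ap by simp
  qed
  have np: "n * p = 0"
  proof -
    have "n * p = a * p - a * (p * p)" unfolding n_def by (simp add: algebra_simps mult.assoc)
    then show ?thesis using pp by simp
  qed
  have apb: "a * p * b = a * b" using pb by (simp add: mult.assoc)
  have bap: "b * (a * p) = a * b" using ab bp by (metis mult.assoc)
  have nb: "n * b = 0"
  proof -
    have "n * b = a * b - a * p * b" unfolding n_def by (simp add: algebra_simps)
    then show ?thesis using apb by simp
  qed
  have an: "a * n = n * a"
  proof -
    have "a * n = a * a - a * (a * p)" unfolding n_def by (simp add: algebra_simps)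
    moreover have "n * a = a * a - a * p * a" unfolding n_def by (simp add: algebra_simps)
    moreover have "a * p * a = a * (a * p)" using ap by (metis mult.assoc)
    ultimately show ?thesis by simp
  qed
  have bn: "b * n = n * b"
  proof -
    have "b * n = b * a - b * (a * p)" unfolding n_def by (simp add: algebra_simps)
    moreover have "n * b = a * b - a * p * b" unfolding n_def by (simp add: algebra_simps)
    ultimately show ?thesis using apb bap ab by simp
  qed
  define r where "r = - geo n k"
  have nr: "n * r = r * n" using geo_comm[of n n k] r_def by simp
  have cnr: "n + r - n * r = 0"
  proof -
    have "spow n (Suc k) = 0" using k by simp
    then show ?thesis using geo_mult[of n k] r_def by (simp add: algebra_simps)
  qed
  have pr: "p * r = 0" using geo_zero[OF pn, of k] r_def by simp
  have rp: "r * p = 0"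
  proof -
    have "p * n = n * p" using pn np by simp
    then have "p * geo n k = geo n k * p" using geo_comm by blast
    then show ?thesis using pr r_def by simp
  qed
  have ar: "a * r = r * a" using geo_comm[OF an, of k] r_def by simp
  have br: "b * r = r * b" using geo_comm[OF bn, of k] r_def by simp
  have aeq: "a = n + a * p" using n_def by simp
  have arr: "a * r = n * r"
  proof -
    have "a * r = n * r + a * (p * r)" by (subst aeq) (simp add: algebra_simps mult.assoc)
    then show ?thesis using pr by simp
  qed
  define s where "s = a + p"
  define q where "q = b + p + r"
  have sq: "s * q = p + a * p + n * r + b + p"
  proof -
    have "s * q = a * b + a * p + a * r + p * b + p * p + p * r"
      unfolding s_def q_def by (simp add: algebra_simps)
    moreover have "a * b = p" using p_def by simp
    ultimately show ?thesis using arr pb pp pr by simp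
  qed
  have c1: "circ s q = 0"
  proof -
    have "circ s q = (a + p + b + p + r) - (p + a * p + n * r + b + p)"
      unfolding circ_def using sq s_def q_def by (simp add: add.assoc)
    also have "\<dots> = n + r - n * r" using n_def by (simp add: algebra_simps)
    finally show ?thesis using cnr by simp
  qed
  have qs: "q * s = s * q"
  proof -
    have "q * s = b * a + b * p + r * a + p * a + p * p + r * p"
      unfolding s_def q_def by (simp add: algebra_simps)
    also have "\<dots> = a * b + p * b + a * r + a * p + p * p + p * r"
      by (simp only: ab[symmetric] bp pb ar[symmetric] ap[symmetric] pr rp)
    also have "\<dots> = s * q" unfolding s_def q_def by (simp add: algebra_simps)
    finally show ?thesis .
  qed
  have c2: "circ q s = 0" using c1 qs unfolding circ_def by (simp add: algebra_simps)
  have "a + p \<in> Qset" unfolding Qset_def using c1 c2 s_def by blast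
  moreover have "a - a * p \<in> Nil_set" using nN n_def by simp
  moreover have "p = p * p" using pp by simp
  ultimately show ?thesis using pc2 by blast
qed

lemma imp31:
  fixes a p :: "'a::ring"
  assumes pp: "p = p * p" and pc: "p \<in> comm a" and nil: "a - a * p \<in> Nil_set"
    and Q: "a + p \<in> Qset"
  shows "strongly_pi_regular a"
proof -
  have ap: "a * p = p * a" using pc unfolding comm_def by simp
  obtain q where c1: "circ (a + p) q = 0" and c2: "circ q (a + p) = 0"
    using Q unfolding Qset_def by blast
  have aq: "a * q = q * a"
    by (rule quasi_comm[OF c1 c2]) (simp add: algebra_simps ap)
  have pq: "p * q = q * p"
    by (rule quasi_comm[OF c1 c2]) (simp add: algebra_simps ap pp[symmetric])
  define c where "c = p * q - p"
  have pp': "p * p = p" using pp by simp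
  have ppq: "p * (p * q) = p * q" using pp' by (metis mult.assoc)
  have "p * (a + p + q - (a + p) * q) = 0" using c1 unfolding circ_def by simp
  then have "p * a + p * p + p * q - p * (a * q) - p * (p * q) = 0" by (simp add: algebra_simps)
  then have e: "p * (a * q) = p * a + p" using pp' ppq by (simp add: algebra_simps)
  have "a * c = a * p * q - a * p" by (simp add: c_def algebra_simps)
  also have "\<dots> = p * (a * q) - p * a"
  proof -
    have "a * p * q = p * (a * q)" using ap by (metis mult.assoc)
    then show ?thesis using ap by simp
  qed
  finally have acp: "a * c = p" using e by simp
  have "c * a = p * (q * a) - p * a" by (simp add: c_def algebra_simps)
  also have "\<dots> = (p * a) * q - p * a" using aq by (simp add: mult.assoc)
  also have "\<dots> = (a * p) * q - a * p" using ap by simp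
  also have "\<dots> = a * c" by (simp add: c_def right_diff_distrib mult.assoc)
  finally have ca: "c * a = a * c" .
  obtain m where "spow (a - a * p) m = 0" using nil Nil_spow by blast
  then have am: "spow a m = spow a m * p" using spow_ortho[OF pp[symmetric] ap, of m] by simp
  have "spow a m = spow a (Suc m) * c" using am acp by (simp add: mult.assoc)
  then have "rpow a (Suc m) = rpow a (Suc m + 1) * c" unfolding rpow_def by simp
  moreover have "c \<in> comm a" using ca unfolding comm_def by simp
  ultimately show ?thesis unfolding strongly_pi_regular_def
    by (intro exI[of _ "Suc m"]) auto
qed

theorem theorem2p10:
  fixes a :: "'a::ring"
  shows "(strongly_pi_regular a
      \<longleftrightarrow> (\<exists>p. p = p * p \<and> p \<in> comm2 a \<and> a - a * p \<in> Nil_set \<and> a + p \<in> Qset))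
    \<and> ((\<exists>p. p = p * p \<and> p \<in> comm2 a \<and> a - a * p \<in> Nil_set \<and> a + p \<in> Qset)
      \<longleftrightarrow> (\<exists>p. p = p * p \<and> p \<in> comm a \<and> a - a * p \<in> Nil_set \<and> a + p \<in> Qset))
    \<and> ((\<exists>p. p = p * p \<and> p \<in> comm a \<and> a - a * p \<in> Nil_set \<and> a + p \<in> Qset)
      \<longleftrightarrow> (\<exists>b\<in>comm2 a. a * (b * b) = b \<and> a * a * b - a \<in> Nil_set))
    \<and> ((\<exists>b\<in>comm2 a. a * (b * b) = b \<and> a * a * b - a \<in> Nil_set)
      \<longleftrightarrow> (\<exists>b\<in>comm a. a * (b * b) = b \<and> a * a * b - a \<in> Nil_set))"
proof -
  have c2c: "x \<in> comm2 a \<Longrightarrow> x \<in> comm a" for x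
    using comm2_comm[of x a] unfolding comm_def by simp
  have i14: "strongly_pi_regular a \<Longrightarrow> (\<exists>b\<in>comm2 a. a * (b * b) = b \<and> a * a * b - a \<in> Nil_set)"
    using imp14 by blast
  have i42: "(\<exists>b\<in>comm2 a. a * (b * b) = b \<and> a * a * b - a \<in> Nil_set) \<Longrightarrow>
     (\<exists>p. p = p * p \<and> p \<in> comm2 a \<and> a - a * p \<in> Nil_set \<and> a + p \<in> Qset)"
    using imp42 by blast
  have i23: "(\<exists>p. p = p * p \<and> p \<in> comm2 a \<and> a - a * p \<in> Nil_set \<and> a + p \<in> Qset) \<Longrightarrow>
     (\<exists>p. p = p * p \<and> p \<in> comm a \<and> a - a * p \<in> Nil_set \<and> a + p \<in> Qset)"
    using c2c by blast
  have i31: "(\<exists>p. p = p * p \<and> p \<in> comm a \<and> a - a * p \<in> Nil_set \<and> a + p \<in> Qset) \<Longrightarrow>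
     strongly_pi_regular a"
    using imp31 by blast
  have i45: "(\<exists>b\<in>comm2 a. a * (b * b) = b \<and> a * a * b - a \<in> Nil_set) \<Longrightarrow>
     (\<exists>b\<in>comm a. a * (b * b) = b \<and> a * a * b - a \<in> Nil_set)"
    using c2c by blast
  have i54: "(\<exists>b\<in>comm a. a * (b * b) = b \<and> a * a * b - a \<in> Nil_set) \<Longrightarrow>
     (\<exists>b\<in>comm2 a. a * (b * b) = b \<and> a * a * b - a \<in> Nil_set)"
    using imp54 by blast
  show ?thesis using i14 i42 i23 i31 i45 i54 by blast
qed

end
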